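(* Let $n\geq 3$ be odd. Then the GFB trees $T_n^{gfb}$ and $T_{n-1}^{gfb}$ have a common maximal pending subtree, and $T_n^{gfb}$ and $T_{n+1}^{gfb}$ have a common maximal pending subtree.
   Context: A rooted binary tree with $n\geq 2$ leaves is a rooted tree whose root has degree 2 and all other internal nodes have degree 3; for $n=1$ it is a single node. Trees are considered up to isomorphism. The maximal pending subtrees of a tree with at least 2 leaves are the two subtrees rooted at the children of the root. The GFB tree $T_n^{gfb}$ is the output of: start with $n$ single-node trees; while more than one tree remains, remove a tree $u$ of minimal size (number of leaves), then remove a tree $v$ of minimal size among the remaining ones, and insert the tree with a new root whose children are the roots of $u$ and $v$; output the remaining tree. *)

theory Defs
  imports Main "HOL-Library.Multiset"
begin

text \<open>Rooted binary trees (ordered representation; isomorphism = unordered equality).\<close>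
datatype tree = Leaf | Node tree tree

fun leaves :: "tree \<Rightarrow> nat" where
  "leaves Leaf = 1"
| "leaves (Node l r) = leaves l + leaves r"

fun iso :: "tree \<Rightarrow> tree \<Rightarrow> bool" where
  "iso Leaf Leaf = True"
| "iso (Node a b) (Node c d) = ((iso a c \<and> iso b d) \<or> (iso a d \<and> iso b c))"
| "iso _ _ = False"

fun max_pending :: "tree \<Rightarrow> tree set" where
  "max_pending Leaf = {}"
| "max_pending (Node l r) = {l, r}"

text \<open>Runs of the GFB procedure on a forest (multiset of trees), with arbitrary
  tie-breaking: gfb_run F t means some execution started on F outputs t.\<close>
inductive gfb_run :: "tree multiset \<Rightarrow> tree \<Rightarrow> bool" where
  finish: "gfb_run {#t#} t"
| step: "\<lbrakk> u \<in># F; \<forall>w\<in>#F. leaves u \<le> leaves w;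
           v \<in># F - {#u#}; \<forall>w\<in>#F - {#u#}. leaves v \<le> leaves w;
           gfb_run (add_mset (Node u v) (F - {#u#} - {#v#})) t \<rbrakk>
         \<Longrightarrow> gfb_run F t"

definition is_gfb :: "nat \<Rightarrow> tree \<Rightarrow> bool" where
  "is_gfb n t \<longleftrightarrow> gfb_run (replicate_mset n Leaf) t"

definition common_max_pending :: "tree \<Rightarrow> tree \<Rightarrow> bool" where
  "common_max_pending t s \<longleftrightarrow> (\<exists>a\<in>max_pending t. \<exists>b\<in>max_pending s. iso a b)"

end

theory Submission imports Defs begin

fun full :: "nat \<Rightarrow> tree" where
  "full 0 = Leaf" | "full (Suc i) = Node (full i) (full i)"

lemma leaves_full[simp]: "leaves (full i) = 2^i" by (induction i) auto

lemma iso_refl: "iso x x" by (induction x) auto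

definition optm :: "tree option \<Rightarrow> tree multiset" where
  "optm S = (case S of None \<Rightarrow> {#} | Some s \<Rightarrow> {#s#})"

definition forest :: "nat \<Rightarrow> nat \<Rightarrow> nat \<Rightarrow> tree option \<Rightarrow> tree multiset" where
  "forest j a b S = replicate_mset a (full j) + replicate_mset b (full (Suc j)) + optm S"

definition good :: "nat \<Rightarrow> tree option \<Rightarrow> bool" where
  "good j S \<longleftrightarrow> (\<forall>s. S = Some s \<longrightarrow> 2^j < leaves s \<and> leaves s < 2^(Suc j))"

definition tot :: "tree multiset \<Rightarrow> nat" where
  "tot F = sum_mset (image_mset leaves F)"

definition concl :: "nat \<Rightarrow> tree \<Rightarrow> bool" where
  "concl N t \<longleftrightarrow> (\<exists>m. 3*(2::nat)^m \<le> 2*N \<and> 2*N < 3*(2::nat)^(Suc m) \<and> full m \<in> max_pending t)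
     \<and> (\<forall>m. N = 3*(2::nat)^m \<longrightarrow> full m \<in> max_pending t \<and> full (Suc m) \<in> max_pending t)"

lemma not3dvd: "\<not> 3 dvd (2::nat)^a"
proof (induction a)
  case 0 then show ?case by simp
next
  case (Suc a) then show ?case by (simp add: dvd_mult_cancel_left) presburger?
qed

lemma pow_ne: "(2::nat)^a \<noteq> 3 * 2^b"
  using not3dvd[of a] by auto

lemma pow_le: "m \<le> j \<Longrightarrow> (2::nat)^m \<le> 2^j" by (simp add: power_increasing)
lemma pow_lt: "m < j \<Longrightarrow> 2 * (2::nat)^m \<le> 2^j"
  by (metis Suc_leI power_Suc pow_le)

lemma F1: "concl (2*2^j) (Node (full j) (full j))"
  unfolding concl_def
proof
  show "\<exists>m. 3*(2::nat)^m \<le> 2*(2*2^j) \<and> 2*(2*2^j) < 3*(2::nat)^(Suc m) \<and> full m \<in> max_pending (Node (full j) (full j))"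
    by (rule exI[of _ j]) auto
  show "\<forall>m. 2*(2::nat)^j = 3*2^m \<longrightarrow> full m \<in> max_pending (Node (full j) (full j)) \<and> full (Suc m) \<in> max_pending (Node (full j) (full j))"
    using pow_ne[of "Suc j"] by auto
qed

lemma F5: "concl (4*2^j) (Node (full (Suc j)) (full (Suc j)))"
  using F1[of "Suc j"] by simp

lemma F3: "concl (3*2^j) (Node (full j) (full (Suc j)))"
  unfolding concl_def
proof
  show "\<exists>m. 3*(2::nat)^m \<le> 2*(3*2^j) \<and> 2*(3*2^j) < 3*(2::nat)^(Suc m) \<and> full m \<in> max_pending (Node (full j) (full (Suc j)))"
    by (rule exI[of _ "Suc j"]) auto
  show "\<forall>m. 3*(2::nat)^j = 3*2^m \<longrightarrow> full m \<in> max_pending (Node (full j) (full (Suc j))) \<and> full (Suc m) \<in> max_pending (Node (full j) (full (Suc j)))"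
    by auto
qed

lemma F2: assumes "2^j < L" "L < 2*(2::nat)^j"
  shows "concl (2^j + L) (Node (full j) s)"
  unfolding concl_def
proof
  show "\<exists>m. 3*(2::nat)^m \<le> 2*(2^j + L) \<and> 2*(2^j+L) < 3*(2::nat)^(Suc m) \<and> full m \<in> max_pending (Node (full j) s)"
    by (rule exI[of _ j]) (use assms in auto)
  have "2^j + L \<noteq> 3*2^m" for m
  proof (cases "m < j")
    case True then show ?thesis using pow_lt[OF True] assms by linarith
  next
    case False then show ?thesis using pow_le[of j m] assms by linarith
  qed
  then show "\<forall>m. 2^j + L = 3*2^m \<longrightarrow> full m \<in> max_pending (Node (full j) s) \<and> full (Suc m) \<in> max_pending (Node (full j) s)" by auto
qed

lemma F4: assumes "2^j < L" "L < 2*(2::nat)^j"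
  shows "concl (L + 2*2^j) (Node s (full (Suc j)))"
  unfolding concl_def
proof
  show "\<exists>m. 3*(2::nat)^m \<le> 2*(L + 2*2^j) \<and> 2*(L + 2*2^j) < 3*(2::nat)^(Suc m) \<and> full m \<in> max_pending (Node s (full (Suc j)))"
    by (rule exI[of _ "Suc j"]) (use assms in auto)
  have "L + 2*2^j \<noteq> 3*2^m" for m
  proof (cases "j < m")
    case True then show ?thesis using pow_lt[OF True] assms by linarith
  next
    case False then show ?thesis using pow_le[of m j] assms by linarith
  qed
  then show "\<forall>m. L + 2*2^j = 3*2^m \<longrightarrow> full m \<in> max_pending (Node s (full (Suc j))) \<and> full (Suc m) \<in> max_pending (Node s (full (Suc j)))" by auto
qed


lemma run_single: "gfb_run {#x#} t \<Longrightarrow> t = x"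
  by (cases rule: gfb_run.cases) auto

lemma min_unique:
  assumes "u \<in># F" "x \<in># F" "\<forall>w\<in>#F. leaves u \<le> leaves w"
    "\<And>w. w \<in># F \<Longrightarrow> leaves w \<le> leaves x \<Longrightarrow> w = x"
  shows "u = x"
  using assms by blast

lemma mem_forest: "w \<in># forest j a b S \<longleftrightarrow> (0 < a \<and> w = full j) \<or> (0 < b \<and> w = full (Suc j)) \<or> S = Some w"
  by (auto simp: forest_def optm_def split: option.splits)

lemma small_full: "good j S \<Longrightarrow> w \<in># forest j a b S \<Longrightarrow> leaves w \<le> 2^j \<Longrightarrow> w = full j"
  by (auto simp: mem_forest good_def)

lemma small_s: "good j (Some s) \<Longrightarrow> w \<in># forest j 0 b (Some s) \<Longrightarrow> leaves w \<le> leaves s \<Longrightarrow> w = s"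
  by (auto simp: mem_forest good_def)

lemma cases_uv:
  assumes F: "F = forest j a b S" and g: "good j S"
    and u: "u \<in># F" "\<forall>w\<in>#F. leaves u \<le> leaves w"
    and v: "v \<in># F - {#u#}" "\<forall>w\<in>#F - {#u#}. leaves v \<le> leaves w"
  shows "(\<exists>a0. a = Suc (Suc a0) \<and> u = full j \<and> v = full j)
   \<or> (\<exists>s. a = 1 \<and> S = Some s \<and> u = full j \<and> v = s)
   \<or> (\<exists>b0. a = 1 \<and> S = None \<and> b = Suc b0 \<and> u = full j \<and> v = full (Suc j))
   \<or> (\<exists>s b0. a = 0 \<and> S = Some s \<and> b = Suc b0 \<and> u = s \<and> v = full (Suc j))
   \<or> (\<exists>b0. a = 0 \<and> S = None \<and> b = Suc (Suc b0) \<and> u = full (Suc j) \<and> v = full (Suc j))"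
proof (cases a)
  case (Suc a1)
  have mj: "full j \<in># F" using F Suc by (simp add: mem_forest)
  have uj: "u = full j"
    by (rule min_unique[OF u(1) mj u(2)]) (use small_full g F in auto)
  have Fu: "F - {#u#} = forest j a1 b S" using F Suc uj by (simp add: forest_def)
  show ?thesis
  proof (cases a1)
    case (Suc a0)
    have mj: "full j \<in># F - {#u#}" using Fu Suc by (simp add: mem_forest)
    have "v = full j"
      by (rule min_unique[OF v(1) mj v(2)]) (use small_full g Fu in auto)
    then show ?thesis using uj \<open>a = Suc a1\<close> Suc by auto
  next
    case 0
    show ?thesis
    proof (cases S)
      case None
      then have "v \<in># replicate_mset b (full (Suc j))" using v Fu 0 by (simp add: forest_def optm_def)
      then show ?thesis using uj \<open>a = Suc a1\<close> 0 None
        by (cases b) (auto split: if_splits)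
    next
      case (Some s)
      have ms: "s \<in># F - {#u#}" using Fu Some by (simp add: mem_forest)
      have "v = s"
        by (rule min_unique[OF v(1) ms v(2)]) (use small_s g Fu Some 0 in auto)
      then show ?thesis using uj \<open>a = Suc a1\<close> 0 Some by auto
    qed
  qed
next
  case 0
  show ?thesis
  proof (cases S)
    case None
    then have um: "u \<in># replicate_mset b (full (Suc j))" using u F 0 by (simp add: forest_def optm_def)
    then obtain b1 where b1: "b = Suc b1" by (cases b) auto
    have uf: "u = full (Suc j)" using um by (auto split: if_splits)
    have "v \<in># replicate_mset b1 (full (Suc j))" using v F 0 None uf b1 by (simp add: forest_def optm_def)
    then show ?thesis using 0 None uf b1 by (cases b1) (auto split: if_splits)
  next
    case (Some s)
    have ms: "s \<in># F" using F Some by (simp add: mem_forest)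
    have us: "u = s"
      by (rule min_unique[OF u(1) ms u(2)]) (use small_s g F Some 0 in auto)
    have "v \<in># replicate_mset b (full (Suc j))" using v F 0 Some us by (simp add: forest_def optm_def)
    then show ?thesis using 0 Some us by (cases b) (auto split: if_splits)
  qed
qed


lemma main:
  "gfb_run F t \<Longrightarrow> F = forest j a b S \<Longrightarrow> good j S \<Longrightarrow> 2 \<le> size F \<Longrightarrow> concl (tot F) t"
proof (induction arbitrary: j a b S rule: gfb_run.induct)
  case (finish t) then show ?case by (metis One_nat_def not_less_eq_eq numeral_2_eq_2 order_refl size_single)
next
  case (step u F v t)
  define R where "R = F - {#u#} - {#v#}"
  have Feq: "F = add_mset u (add_mset v R)"
    using step.hyps(1,3) unfolding R_def by (metis insert_DiffM)
  have totF: "tot F = leaves u + leaves v + tot R" using Feq by (simp add: tot_def)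
  have tot': "tot (add_mset (Node u v) R) = tot F" using totF by (simp add: tot_def)
  have IH: "concl (tot F) t" if "add_mset (Node u v) R = forest j' a' b' S'" "good j' S'" "R \<noteq> {#}" for j' a' b' S'
  proof -
    have "2 \<le> size (add_mset (Node u v) R)" using that(3) by (cases R) auto
    then show ?thesis using step.IH[OF _ that(2)] that(1) tot' unfolding R_def by metis
  qed
  have fin: "t = Node u v" if "R = {#}" using step.hyps(5) that unfolding R_def by (simp add: run_single)
  from cases_uv[OF step.prems(1,2) step.hyps(1,2,3,4)]
  show ?case
  proof (elim disjE exE conjE)
    fix a0 assume h: "a = Suc (Suc a0)" "u = full j" "v = full j"
    have R: "R = forest j a0 b S" using Feq step.prems(1) h by (simp add: forest_def)
    show ?thesis
    proof (cases "R = {#}")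
      case True
      then have "a0 = 0" "b = 0" "S = None" using R by (auto simp: forest_def optm_def split: option.splits)
      then show ?thesis using fin[OF True] totF R True h F1[of j] by (simp add: tot_def mult_2)
    next
      case False
      show ?thesis by (rule IH[OF _ _ False, of j a0 "Suc b" S]) (use R h step.prems(2) in \<open>auto simp: forest_def\<close>)
    qed
  next
    fix s assume h: "a = 1" "S = Some s" "u = full j" "v = s"
    have R: "R = replicate_mset b (full (Suc j))" using Feq step.prems(1) h by (simp add: forest_def optm_def)
    have gs: "2^j < leaves s" "leaves s < 2*2^j" using step.prems(2) h by (auto simp: good_def)
    show ?thesis
    proof (cases "R = {#}")
      case True
      then show ?thesis using fin[OF True] totF h F2[OF gs, of s] by (simp add: tot_def)
    next
      case False
      show ?thesis by (rule IH[OF _ _ False, of "Suc j" b 0 "Some (Node (full j) s)"]) (use R h gs in \<open>auto simp: forest_def optm_def good_def\<close>)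
    qed
  next
    fix b0 assume h: "a = 1" "S = None" "b = Suc b0" "u = full j" "v = full (Suc j)"
    have R: "R = replicate_mset b0 (full (Suc j))" using Feq step.prems(1) h by (simp add: forest_def optm_def)
    show ?thesis
    proof (cases "R = {#}")
      case True
      then have "tot F = 3*2^j" using totF h by (simp add: tot_def)
      then show ?thesis using fin[OF True] h F3[of j] by simp
    next
      case False
      show ?thesis by (rule IH[OF _ _ False, of "Suc j" b0 0 "Some (Node (full j) (full (Suc j)))"]) (use R h in \<open>auto simp: forest_def optm_def good_def\<close>)
    qed
  next
    fix s b0 assume h: "a = 0" "S = Some s" "b = Suc b0" "u = s" "v = full (Suc j)"
    have R: "R = replicate_mset b0 (full (Suc j))" using Feq step.prems(1) h by (simp add: forest_def optm_def)
    have gs: "2^j < leaves s" "leaves s < 2*2^j" using step.prems(2) h by (auto simp: good_def)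
    show ?thesis
    proof (cases "R = {#}")
      case True
      then show ?thesis using fin[OF True] totF h F4[OF gs, of s] by (simp add: tot_def mult_2)
    next
      case False
      show ?thesis by (rule IH[OF _ _ False, of "Suc j" b0 0 "Some (Node s (full (Suc j)))"]) (use R h gs in \<open>auto simp: forest_def optm_def good_def\<close>)
    qed
  next
    fix b0 assume h: "a = 0" "S = None" "b = Suc (Suc b0)" "u = full (Suc j)" "v = full (Suc j)"
    have R: "R = replicate_mset b0 (full (Suc j))" using Feq step.prems(1) h by (simp add: forest_def optm_def)
    show ?thesis
    proof (cases "R = {#}")
      case True
      then have "tot F = 4*2^j" using totF h by (simp add: tot_def)
      then show ?thesis using fin[OF True] h F5[of j] by simp
    next
      case False
      show ?thesis by (rule IH[OF _ _ False, of "Suc j" b0 1 None]) (use R h in \<open>auto simp: forest_def optm_def good_def\<close>)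
    qed
  qed
qed


lemma uniq:
  assumes "3*(2::nat)^m \<le> 2*N" "2*N < 3*(2::nat)^(Suc m)"
    "3*(2::nat)^m' \<le> 2*N" "2*N < 3*(2::nat)^(Suc m')"
  shows "m = m'"
proof (rule ccontr)
  assume "m \<noteq> m'"
  then consider "m < m'" | "m' < m" by linarith
  then show False
  proof cases
    case 1 then show False using pow_lt[OF 1] assms by simp
  next
    case 2 then show False using pow_lt[OF 2] assms by simp
  qed
qed

lemma gfb_concl: "is_gfb n t \<Longrightarrow> 2 \<le> n \<Longrightarrow> concl n t"
proof -
  assume a: "is_gfb n t" "2 \<le> n"
  have e: "replicate_mset n Leaf = forest 0 n 0 None" by (simp add: forest_def optm_def)
  have g: "good 0 None" by (simp add: good_def)
  have t: "tot (replicate_mset n Leaf) = n" by (simp add: tot_def)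
  show ?thesis using main[OF a(1)[unfolded is_gfb_def] e g] a(2) t by simp
qed

theorem lemma9:
  fixes n :: nat and t t' t'' :: tree
  assumes "odd n" and "n \<ge> 3"
    and "is_gfb n t" and "is_gfb (n - 1) t'" and "is_gfb (n + 1) t''"
  shows "common_max_pending t t' \<and> common_max_pending t t''"
proof -
  have c: "concl n t" using gfb_concl assms(3,2) by simp
  have c': "concl (n-1) t'" using gfb_concl assms(4,2) by simp
  have c'': "concl (n+1) t''" using gfb_concl assms(5,2) by simp
  have cm: "common_max_pending x y" if "full k \<in> max_pending x" "full k \<in> max_pending y" for x y k
    using that iso_refl unfolding common_max_pending_def by blast
  obtain m where m: "3*(2::nat)^m \<le> 2*n" "2*n < 3*2^(Suc m)" "full m \<in> max_pending t"
    using c unfolding concl_def by blast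
  obtain m' where m': "3*(2::nat)^m' \<le> 2*(n-1)" "2*(n-1) < 3*2^(Suc m')" "full m' \<in> max_pending t'"
    using c' unfolding concl_def by blast
  obtain m'' where m'': "3*(2::nat)^m'' \<le> 2*(n+1)" "2*(n+1) < 3*2^(Suc m'')" "full m'' \<in> max_pending t''"
    using c'' unfolding concl_def by blast
  show ?thesis
  proof (cases "n = 3")
    case True
    have t3: "full 0 \<in> max_pending t" "full 1 \<in> max_pending t"
      using c True unfolding concl_def by auto
    have "m' = 0" using uniq[OF m'(1,2), of 0] True by simp
    moreover have "m'' = 1" using uniq[OF m''(1,2), of 1] True by simp
    ultimately show ?thesis using cm[of 0 t t'] cm[of 1 t t''] t3 m'(3) m''(3) by simp
  next
    case False
    then have n5: "n \<ge> 5" using assms(1,2) by presburger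
    obtain k where k: "m = Suc k"
      using m(2) n5 by (cases m) auto
    have "3*2^k \<le> n" using m(1) k by simp
    moreover have "3*(2::nat)^k \<noteq> n"
    proof (cases k)
      case 0 then show ?thesis using n5 by simp
    next
      case (Suc k') then show ?thesis using assms(1) by auto
    qed
    ultimately have "3*2^m \<le> 2*(n-1)" using k by simp
    then have "m' = m" using uniq[OF m'(1,2), of m] m(2) by simp
    then have A: "common_max_pending t t'" using cm m(3) m'(3) by blast
    have B: "common_max_pending t t''"
    proof (cases "2*(n+1) < 3*2^(Suc m)")
      case True
      then have "m'' = m" using uniq[OF m''(1,2), of m] m(1) by simp
      then show ?thesis using cm m(3) m''(3) by blast
    next
      case False
      then have "n + 1 = 3*2^m" using m(2) by simp
      then have "full m \<in> max_pending t''" using c'' unfolding concl_def by blast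
      then show ?thesis using cm m(3) by blast
    qed
    show ?thesis using A B by blast
  qed
qed

end
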